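(* Let $p$ be an odd prime, $q=p^m$, $q=et+1$ with integers $e\geq 2,t\geq 1$, $R_{e,q}=\mathbb{F}_q[u]/\langle u^e-1\rangle$ with orthogonal idempotents $\mu_1,\dots,\mu_e$ (see context). Let $\mathcal{C}=\bigoplus_{i=1}^e\mu_i\mathcal{C}_i$ be a cyclic code of length $n$ over $R_{e,q}$. Then $\mathcal{C}$ is an LCD code if and only if $\mathcal{C}_i$ is an LCD cyclic code of length $n$ over $\mathbb{F}_q$ for every $1\leq i\leq e$.
   Context: Write $u^e-1=\prod_{i=1}^e(u-\alpha_i)$ over $\mathbb{F}_q$, $G_i=u-\alpha_i$, $\widehat{G}_i=(u^e-1)/G_i$, $z_iG_i+h_i\widehat{G}_i=1$, $\mu_i=h_i\widehat{G}_i$; these are pairwise orthogonal idempotents summing to $1$. For a linear code $\mathcal{C}\subseteq R_{e,q}^n$, $\mathcal{C}_i=\{s_i\in\mathbb{F}_q^n:\exists\, s_j\ (j\neq i)\text{ with }\sum_{j}s_j\mu_j\in\mathcal{C}\}$ and $\mathcal{C}=\bigoplus_i\mu_i\mathcal{C}_i$. A linear code $\mathcal{C}$ is LCD (linear complementary dual) if $\mathcal{C}\cap\mathcal{C}^\perp=\{0\}$, the dual taken with respect to the Euclidean inner product. *)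

theory Defs
  imports "HOL-Computational_Algebra.Polynomial"
begin

definition fdot :: "nat \<Rightarrow> 'a::field list \<Rightarrow> 'a list \<Rightarrow> 'a" where
  "fdot n v w = (\<Sum>k<n. v ! k * w ! k)"

definition f_linear_code :: "nat \<Rightarrow> 'a::field list set \<Rightarrow> bool" where
  "f_linear_code n C \<longleftrightarrow>
     C \<subseteq> {v. length v = n} \<and> replicate n 0 \<in> C \<and>
     (\<forall>v\<in>C. \<forall>w\<in>C. map2 (+) v w \<in> C) \<and>
     (\<forall>c. \<forall>v\<in>C. map (\<lambda>x. c * x) v \<in> C)"

definition f_cyclic_code :: "nat \<Rightarrow> 'a::field list set \<Rightarrow> bool" where
  "f_cyclic_code n C \<longleftrightarrow> f_linear_code n C \<and> (\<forall>v\<in>C. rotate1 v \<in> C)"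

definition f_dual :: "nat \<Rightarrow> 'a::field list set \<Rightarrow> 'a list set" where
  "f_dual n C = {w. length w = n \<and> (\<forall>v\<in>C. fdot n v w = 0)}"

definition f_LCD :: "nat \<Rightarrow> 'a::field list set \<Rightarrow> bool" where
  "f_LCD n C \<longleftrightarrow> f_linear_code n C \<and> C \<inter> f_dual n C = {replicate n 0}"

section \<open>The ring R_{e,q} = F_q[u]/<u^e - 1>, elements = polynomials of degree < e\<close>

definition Pe :: "nat \<Rightarrow> 'a::field poly" where
  "Pe e = monom 1 e - 1"

definition Relem :: "nat \<Rightarrow> 'a::field poly \<Rightarrow> bool" where
  "Relem e f \<longleftrightarrow> degree f < e"

definition rmul :: "nat \<Rightarrow> 'a::field poly \<Rightarrow> 'a poly \<Rightarrow> 'a poly" where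
  "rmul e f g = (f * g) mod Pe e"

definition rdot :: "nat \<Rightarrow> nat \<Rightarrow> 'a::field poly list \<Rightarrow> 'a poly list \<Rightarrow> 'a poly" where
  "rdot e n v w = (\<Sum>k<n. v ! k * w ! k) mod Pe e"

definition r_linear_code :: "nat \<Rightarrow> nat \<Rightarrow> 'a::field poly list set \<Rightarrow> bool" where
  "r_linear_code e n C \<longleftrightarrow>
     C \<subseteq> {v. length v = n \<and> (\<forall>x\<in>set v. Relem e x)} \<and> replicate n 0 \<in> C \<and>
     (\<forall>v\<in>C. \<forall>w\<in>C. map2 (+) v w \<in> C) \<and>
     (\<forall>r. Relem e r \<longrightarrow> (\<forall>v\<in>C. map (rmul e r) v \<in> C))"

definition r_cyclic_code :: "nat \<Rightarrow> nat \<Rightarrow> 'a::field poly list set \<Rightarrow> bool" where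
  "r_cyclic_code e n C \<longleftrightarrow> r_linear_code e n C \<and> (\<forall>v\<in>C. rotate1 v \<in> C)"

definition r_dual :: "nat \<Rightarrow> nat \<Rightarrow> 'a::field poly list set \<Rightarrow> 'a poly list set" where
  "r_dual e n C = {w. length w = n \<and> (\<forall>x\<in>set w. Relem e x) \<and> (\<forall>v\<in>C. rdot e n v w = 0)}"

definition r_LCD :: "nat \<Rightarrow> nat \<Rightarrow> 'a::field poly list set \<Rightarrow> bool" where
  "r_LCD e n C \<longleftrightarrow> r_linear_code e n C \<and> C \<inter> r_dual e n C = {replicate n 0}"

text \<open>The index i in 1..e is replaced by the root alpha_i itself.\<close>

definition eroots :: "nat \<Rightarrow> 'a::field set" where
  "eroots e = {a. a ^ e = 1}"

definition Gi :: "'a::field \<Rightarrow> 'a poly" where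
  "Gi a = [:-a, 1:]"

definition Ghat :: "nat \<Rightarrow> 'a::field \<Rightarrow> 'a poly" where
  "Ghat e a = Pe e div Gi a"

definition mu :: "nat \<Rightarrow> 'a::field \<Rightarrow> 'a poly" where
  "mu e a = ((SOME h. \<exists>z. z * Gi a + h * Ghat e a = 1) * Ghat e a) mod Pe e"

definition comp_code :: "nat \<Rightarrow> nat \<Rightarrow> 'a::field poly list set \<Rightarrow> 'a \<Rightarrow> 'a list set" where
  "comp_code e n C a = {s. length s = n \<and>
     (\<exists>S. S a = s \<and> (\<forall>b\<in>eroots e. length (S b) = n) \<and>
          map (\<lambda>k. \<Sum>b\<in>eroots e. smult (S b ! k) (mu e b)) [0..<n] \<in> C)}"

end

theory Submission
  imports Defs
begin

lemma fermat_ff: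
  fixes x :: "'a::{field,finite}"
  assumes "x \<noteq> 0"
  shows "x ^ (card (UNIV :: 'a set) - 1) = 1"
proof -
  let ?N = "UNIV - {0::'a}"
  have cN: "card ?N = card (UNIV :: 'a set) - 1" by (simp add: card_Diff_singleton)
  have "(\<Prod>y\<in>?N. x * y) = x ^ card ?N * \<Prod>?N"
    by (simp add: prod.distrib)
  moreover have "(\<Prod>y\<in>?N. x * y) = (\<Prod>y\<in>?N. y)"
    by (rule prod.reindex_bij_witness[of _ "\<lambda>y. y / x" "\<lambda>y. x * y"]) (use assms in auto)
  moreover have "\<Prod>?N \<noteq> 0" by (subst prod_zero_iff) auto
  ultimately show ?thesis using cN by (metis mult_cancel_right2)
qed

lemma degree_monom_minus1:
  assumes "k > 0"
  shows "degree (monom (1::'a::field) k - 1) = k"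
proof -
  have "degree (monom (1::'a) k - 1) = degree (monom (1::'a) k + (- 1))" by simp
  also have "\<dots> = k" using assms by (subst degree_add_eq_left) (auto simp: degree_monom_eq)
  finally show ?thesis .
qed

lemma card_eroots_ge:
  assumes "card (UNIV :: 'a::{field,finite} set) = e * t + 1" and "e > 0" and "t > 0"
  shows "e \<le> card (eroots e :: 'a set)"
proof -
  let ?N = "UNIV - {0::'a}"
  let ?E = "eroots e :: 'a set"
  let ?Y = "(\<lambda>x. x ^ e) ` ?N"
  let ?Q = "monom (1::'a) t - 1"
  have dQ: "degree ?Q = t" using assms by (simp add: degree_monom_minus1)
  hence Q0: "?Q \<noteq> 0" using assms by auto
  have "?Y \<subseteq> {y. poly ?Q y = 0}"
  proof
    fix y assume "y \<in> ?Y"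
    then obtain x where "x \<noteq> 0" "y = x ^ e" by auto
    hence "y ^ t = 1" using fermat_ff[of x] assms(1) by (simp add: power_mult[symmetric])
    thus "y \<in> {y. poly ?Q y = 0}" by (simp add: poly_monom)
  qed
  hence "card ?Y \<le> card {y. poly ?Q y = 0}"
    by (rule card_mono[OF poly_roots_finite[OF Q0]])
  hence cY: "card ?Y \<le> t"
    using card_poly_roots_bound[OF Q0] dQ by linarith
  have fib: "card {x. x ^ e = y} \<le> card ?E" if "y \<in> ?Y" for y
  proof -
    obtain x0 where x0: "x0 \<noteq> 0" "y = x0 ^ e" using \<open>y \<in> ?Y\<close> by auto
    have "{x. x ^ e = y} \<subseteq> (\<lambda>z. x0 * z) ` ?E"
    proof
      fix x assume "x \<in> {x. x ^ e = y}"
      hence "x ^ e = x0 ^ e" using x0 by simp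
      hence "(x / x0) ^ e = 1" using x0 by (simp add: power_divide)
      moreover have "x = x0 * (x / x0)" using x0 by simp
      ultimately show "x \<in> (\<lambda>z. x0 * z) ` ?E" unfolding eroots_def by blast
    qed
    hence "card {x. x ^ e = y} \<le> card ((\<lambda>z. x0 * z) ` ?E)" by (intro card_mono) auto
    also have "\<dots> \<le> card ?E" by (rule card_image_le) auto
    finally show ?thesis .
  qed
  have "?N \<subseteq> (\<Union>y\<in>?Y. {x. x ^ e = y})" by auto
  hence "card ?N \<le> card (\<Union>y\<in>?Y. {x. x ^ e = y})" by (intro card_mono) auto
  also have "\<dots> \<le> (\<Sum>y\<in>?Y. card {x. x ^ e = y})" by (rule card_UN_le) auto
  also have "\<dots> \<le> (\<Sum>y\<in>?Y. card ?E)" by (rule sum_mono) (rule fib)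
  also have "\<dots> = card ?Y * card ?E" by simp
  also have "\<dots> \<le> t * card ?E" using cY by simp
  finally have "e * t \<le> t * card ?E" using assms(1) by (simp add: card_Diff_singleton)
  thus ?thesis using assms by (simp add: mult.commute)
qed


lemma poly_Pe: "poly (Pe e) c = c ^ e - 1"
  by (simp add: Pe_def poly_monom)

lemma degree_Pe: "e > 0 \<Longrightarrow> degree (Pe e :: 'a::field poly) = e"
  by (simp add: Pe_def degree_monom_minus1)

lemma Pe_nz: "e > 0 \<Longrightarrow> (Pe e :: 'a::field poly) \<noteq> 0"
  using degree_Pe[of e] by (metis degree_0 less_irrefl)

lemma poly_mod_Pe:
  assumes "c \<in> eroots e"
  shows "poly (f mod Pe e) c = poly f c"
proof -
  have "f = f div Pe e * Pe e + f mod Pe e" by simp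
  hence "poly f c = poly (f div Pe e) c * poly (Pe e) c + poly (f mod Pe e) c"
    by (metis poly_add poly_mult)
  also have "\<dots> = poly (f mod Pe e) c" using assms by (simp add: poly_Pe eroots_def)
  finally show ?thesis by simp
qed

lemma Relem_mod: "e > 0 \<Longrightarrow> Relem e (f mod Pe e :: 'a::field poly)"
  unfolding Relem_def
  by (metis degree_0 degree_Pe degree_mod_less' Pe_nz)

lemma zero_on_roots:
  fixes f :: "'a::{field,finite} poly"
  assumes "e \<le> card (eroots e :: 'a set)" "degree f < e" "\<forall>c\<in>eroots e. poly f c = 0"
  shows "f = 0"
proof (rule ccontr)
  assume f0: "f \<noteq> 0"
  have "eroots e \<subseteq> {x. poly f x = 0}" using assms(3) by auto
  hence "card (eroots e :: 'a set) \<le> card {x. poly f x = 0}"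
    by (rule card_mono[OF poly_roots_finite[OF f0]])
  thus False using card_poly_roots_bound[OF f0] assms(1,2) by linarith
qed

lemma mu_props:
  fixes a :: "'a::{field,finite}"
  assumes E: "e \<le> card (eroots e :: 'a set)" and e0: "e > 0" and a: "a \<in> eroots e"
  shows "Relem e (mu e a)" and "\<And>b. b \<in> eroots e \<Longrightarrow> poly (mu e a) b = (if b = a then 1 else 0)"
proof -
  show "Relem e (mu e a)" unfolding mu_def using Relem_mod[OF e0] by blast
  have dv: "Gi a dvd Pe e" using a unfolding Gi_def eroots_def
    by (simp add: poly_eq_0_iff_dvd[symmetric] poly_Pe)
  hence fac: "Pe e = Gi a * Ghat e a" unfolding Ghat_def by (rule dvd_mult_div_cancel[symmetric])
  have Gh0: "poly (Ghat e a) b = 0" if "b \<in> eroots e" "b \<noteq> a" for b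
  proof -
    have "poly (Pe e) b = 0" using that by (simp add: poly_Pe eroots_def)
    hence "poly (Gi a * Ghat e a) b = 0" by (simp only: fac)
    hence "poly (Gi a) b * poly (Ghat e a) b = 0" by (simp only: poly_mult)
    thus ?thesis using that by (simp add: Gi_def)
  qed
  have Gha: "poly (Ghat e a) a \<noteq> 0"
  proof
    assume h: "poly (Ghat e a) a = 0"
    have nz: "Ghat e a \<noteq> 0" using fac Pe_nz[OF e0] by auto
    have "degree (Gi a * Ghat e a) = degree (Gi a) + degree (Ghat e a)"
      by (rule degree_mult_eq) (auto simp: Gi_def nz)
    hence "degree (Pe e :: 'a poly) = degree (Gi a) + degree (Ghat e a)"
      by (simp only: fac)
    hence "degree (Ghat e a) < e" using degree_Pe[OF e0, where 'a='a] by (simp add: Gi_def)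
    moreover have "\<forall>c\<in>eroots e. poly (Ghat e a) c = 0" using h Gh0 by metis
    ultimately have "Ghat e a = 0" using zero_on_roots[OF E] by blast
    thus False using nz by simp
  qed
  define h0 where "h0 = [:1 / poly (Ghat e a) a:]"
  have "poly (1 - h0 * Ghat e a) a = 0" using Gha by (simp add: h0_def)
  hence "Gi a dvd (1 - h0 * Ghat e a)" unfolding Gi_def by (simp only: poly_eq_0_iff_dvd)
  hence "((1 - h0 * Ghat e a) div Gi a) * Gi a + h0 * Ghat e a = 1"
    by (metis dvd_div_mult_self diff_add_cancel)
  hence ex: "\<exists>h. \<exists>z. z * Gi a + h * Ghat e a = 1" by blast
  define H where "H = (SOME h. \<exists>z. z * Gi a + h * Ghat e a = 1)"
  obtain Z where Z: "Z * Gi a + H * Ghat e a = 1" using someI_ex[OF ex] unfolding H_def by blast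
  fix b :: 'a assume b: "b \<in> eroots e"
  have "poly (mu e a) b = poly (H * Ghat e a) b" unfolding mu_def H_def[symmetric] using b by (rule poly_mod_Pe)
  also have "\<dots> = (if b = a then 1 else 0)"
  proof (cases "b = a")
    case True
    have "poly (Z * Gi a + H * Ghat e a) a = 1" using Z by simp
    thus ?thesis using True by (simp add: Gi_def)
  next
    case False
    thus ?thesis using Gh0[OF b False] by simp
  qed
  finally show "poly (mu e a) b = (if b = a then 1 else 0)" .
qed


definition evc :: "'a::field \<Rightarrow> 'a poly list \<Rightarrow> 'a list" where
  "evc c v = map (\<lambda>f. poly f c) v"

lemma lin_mem:
  assumes "r_linear_code e n C" "v \<in> C"
  shows "length v = n" "\<And>k. k < n \<Longrightarrow> Relem e (v ! k)"
  using assms unfolding r_linear_code_def by (auto dest!: subsetD)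

lemma comp_code_eq:
  fixes C :: "'a::{field,finite} poly list set"
  assumes E: "e \<le> card (eroots e :: 'a set)" and e0: "e > 0"
    and lin: "r_linear_code e n C" and a: "a \<in> eroots e"
  shows "comp_code e n C a = evc a ` C"
proof
  show "comp_code e n C a \<subseteq> evc a ` C"
  proof
    fix s assume "s \<in> comp_code e n C a"
    then obtain S where sl: "length s = n" and Sa: "S a = s" and Sl: "\<forall>b\<in>eroots e. length (S b) = n"
      and LC: "map (\<lambda>k. \<Sum>b\<in>eroots e. smult (S b ! k) (mu e b)) [0..<n] \<in> C"
      unfolding comp_code_def by blast
    define L where "L = map (\<lambda>k. \<Sum>b\<in>eroots e. smult (S b ! k) (mu e b)) [0..<n]"
    have "evc a L = s"
    proof (rule nth_equalityI)
      show "length (evc a L) = length s" using sl by (simp add: evc_def L_def)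
      fix k assume "k < length (evc a L)"
      hence k: "k < n" by (simp add: evc_def L_def)
      have "evc a L ! k = (\<Sum>b\<in>eroots e. S b ! k * poly (mu e b) a)"
        using k by (simp add: evc_def L_def poly_sum)
      also have "\<dots> = (\<Sum>b\<in>eroots e. if b = a then S a ! k else 0)"
        by (rule sum.cong) (auto simp: mu_props(2)[OF E e0 _ a] a)
      also have "\<dots> = S a ! k" using a by simp
      finally show "evc a L ! k = s ! k" using Sa by simp
    qed
    thus "s \<in> evc a ` C" using LC L_def by blast
  qed
next
  show "evc a ` C \<subseteq> comp_code e n C a"
  proof
    fix s assume "s \<in> evc a ` C"
    then obtain v where v: "v \<in> C" and s: "s = evc a v" by blast
    have vl: "length v = n" using lin_mem[OF lin v] by simp
    define S where "S = (\<lambda>b. evc b v)"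
    have "map (\<lambda>k. \<Sum>b\<in>eroots e. smult (S b ! k) (mu e b)) [0..<n] = v"
    proof (rule nth_equalityI)
      show "length (map (\<lambda>k. \<Sum>b\<in>eroots e. smult (S b ! k) (mu e b)) [0..<n]) = length v"
        using vl by simp
      fix k assume "k < length (map (\<lambda>k. \<Sum>b\<in>eroots e. smult (S b ! k) (mu e b)) [0..<n])"
      hence k: "k < n" by simp
      define D where "D = (\<Sum>b\<in>eroots e. smult (S b ! k) (mu e b)) - v ! k"
      have "degree (\<Sum>b\<in>eroots e. smult (S b ! k) (mu e b)) < e"
      proof (rule degree_sum_less[OF _ e0])
        fix b :: 'a assume "b \<in> eroots e"
        thus "degree (smult (S b ! k) (mu e b)) < e"
          using mu_props(1)[OF E e0, of b] degree_smult_le[of "S b ! k" "mu e b"]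
          unfolding Relem_def by linarith
      qed
      moreover have "degree (v ! k) < e" using lin_mem(2)[OF lin v k] by (simp add: Relem_def)
      ultimately have dD: "degree D < e" unfolding D_def
        using degree_diff_le_max[of "\<Sum>b\<in>eroots e. smult (S b ! k) (mu e b)" "v ! k"] by linarith
      have "\<forall>c\<in>eroots e. poly D c = 0"
      proof
        fix c :: 'a assume c: "c \<in> eroots e"
        have "poly D c = (\<Sum>b\<in>eroots e. S b ! k * poly (mu e b) c) - poly (v ! k) c"
          by (simp add: D_def poly_sum)
        also have "(\<Sum>b\<in>eroots e. S b ! k * poly (mu e b) c) = (\<Sum>b\<in>eroots e. if b = c then S c ! k else 0)"
          by (rule sum.cong) (auto simp: mu_props(2)[OF E e0 _ c] c)
        also have "\<dots> = poly (v ! k) c" using c k vl by (simp add: S_def evc_def)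
        finally show "poly D c = 0" by simp
      qed
      hence "D = 0" using zero_on_roots[OF E dD] by blast
      thus "map (\<lambda>k. \<Sum>b\<in>eroots e. smult (S b ! k) (mu e b)) [0..<n] ! k = v ! k"
        using k by (simp add: D_def)
    qed
    moreover have "\<forall>b\<in>eroots e. length (S b) = n" using vl by (simp add: S_def evc_def)
    moreover have "length s = n" using s vl by (simp add: evc_def)
    ultimately show "s \<in> comp_code e n C a" unfolding comp_code_def using v s S_def by auto
  qed
qed


lemma evc_length[simp]: "length (evc c v) = length v"
  by (simp add: evc_def)

lemma evc_rep[simp]: "evc c (replicate n 0) = replicate n 0"
  by (simp add: evc_def)

lemma evc_add: "length v = length w \<Longrightarrow> evc c (map2 (+) v w) = map2 (+) (evc c v) (evc c w)"
  by (rule nth_equalityI) (auto simp: evc_def)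

lemma evc_rmul: "c \<in> eroots e \<Longrightarrow> evc c (map (rmul e r) v) = map (\<lambda>x. poly r c * x) (evc c v)"
  by (simp add: evc_def rmul_def poly_mod_Pe)

lemma evc_rot: "evc c (rotate1 v) = rotate1 (evc c v)"
  by (simp add: evc_def rotate1_map)

lemma poly_rdot:
  assumes "c \<in> eroots e" "length v = n" "length w = n"
  shows "poly (rdot e n v w) c = fdot n (evc c v) (evc c w)"
  using assms by (simp add: rdot_def poly_mod_Pe fdot_def evc_def poly_sum)

lemma rdot_zero_iff:
  fixes v w :: "'a::{field,finite} poly list"
  assumes E: "e \<le> card (eroots e :: 'a set)" and e0: "e > 0" and "length v = n" "length w = n"
  shows "rdot e n v w = 0 \<longleftrightarrow> (\<forall>c\<in>eroots e. fdot n (evc c v) (evc c w) = 0)"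
proof
  assume "rdot e n v w = 0" thus "\<forall>c\<in>eroots e. fdot n (evc c v) (evc c w) = 0"
    using poly_rdot[OF _ assms(3,4)] by (metis poly_0)
next
  assume h: "\<forall>c\<in>eroots e. fdot n (evc c v) (evc c w) = 0"
  have "degree (rdot e n v w) < e" using Relem_mod[OF e0] unfolding rdot_def Relem_def by blast
  moreover have "\<forall>c\<in>eroots e. poly (rdot e n v w) c = 0" using h poly_rdot[OF _ assms(3,4)] by simp
  ultimately show "rdot e n v w = 0" using zero_on_roots[OF E] by blast
qed

lemma vec_zero:
  fixes w :: "'a::{field,finite} poly list"
  assumes E: "e \<le> card (eroots e :: 'a set)" and "length w = n" "\<forall>x\<in>set w. Relem e x"
    and "\<forall>c\<in>eroots e. evc c w = replicate n 0"
  shows "w = replicate n 0"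
proof (rule nth_equalityI)
  show "length w = length (replicate n (0::'a poly))" using assms by simp
  fix k assume "k < length w"
  hence k: "k < n" "w ! k \<in> set w" using assms by auto
  have "\<forall>c\<in>eroots e. poly (w ! k) c = 0"
  proof
    fix c :: 'a assume "c \<in> eroots e"
    hence "evc c w ! k = 0" using assms(4) k by simp
    thus "poly (w ! k) c = 0" using k assms(2) by (simp add: evc_def)
  qed
  hence "w ! k = 0" using zero_on_roots[OF E] k assms(3) unfolding Relem_def by blast
  thus "w ! k = replicate n 0 ! k" using k by simp
qed

lemma fdot_rep0[simp]: "fdot n v (replicate n 0) = 0"
  by (simp add: fdot_def)

lemma evc_cyclic:
  fixes C :: "'a::{field,finite} poly list set"
  assumes e0: "e > 0" and cyc: "r_cyclic_code e n C" and a: "a \<in> eroots e"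
  shows "f_cyclic_code n (evc a ` C)"
proof -
  have lin: "r_linear_code e n C" using cyc by (simp add: r_cyclic_code_def)
  have "evc a ` C \<subseteq> {v. length v = n}" using lin_mem(1)[OF lin] by auto
  moreover have "replicate n 0 \<in> evc a ` C"
    using lin unfolding r_linear_code_def by (metis evc_rep image_eqI)
  moreover have "\<forall>v\<in>evc a ` C. \<forall>w\<in>evc a ` C. map2 (+) v w \<in> evc a ` C"
  proof (intro ballI)
    fix s s' assume "s \<in> evc a ` C" "s' \<in> evc a ` C"
    then obtain v w where "v \<in> C" "w \<in> C" "s = evc a v" "s' = evc a w" by blast
    moreover have "length v = length w" using lin_mem(1)[OF lin] calculation by simp
    moreover have "map2 (+) v w \<in> C" using lin calculation unfolding r_linear_code_def by blast
    ultimately show "map2 (+) s s' \<in> evc a ` C" by (metis evc_add image_eqI)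
  qed
  moreover have "\<forall>c. \<forall>v\<in>evc a ` C. map (\<lambda>x. c * x) v \<in> evc a ` C"
  proof (intro allI ballI)
    fix c :: 'a and s assume "s \<in> evc a ` C"
    then obtain v where v: "v \<in> C" "s = evc a v" by blast
    have "Relem e [:c:]" using e0 by (simp add: Relem_def)
    hence "map (rmul e [:c:]) v \<in> C" using lin v unfolding r_linear_code_def by blast
    moreover have "evc a (map (rmul e [:c:]) v) = map (\<lambda>x. c * x) s" using v evc_rmul[OF a] by simp
    ultimately show "map (\<lambda>x. c * x) s \<in> evc a ` C" by (metis image_eqI)
  qed
  moreover have "\<forall>v\<in>evc a ` C. rotate1 v \<in> evc a ` C"
  proof
    fix s assume "s \<in> evc a ` C"
    then obtain v where v: "v \<in> C" "s = evc a v" by blast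
    hence "rotate1 v \<in> C" using cyc unfolding r_cyclic_code_def by blast
    moreover have "evc a (rotate1 v) = rotate1 s" using v by (simp add: evc_rot)
    ultimately show "rotate1 s \<in> evc a ` C" by (metis image_eqI)
  qed
  ultimately show ?thesis unfolding f_cyclic_code_def f_linear_code_def by blast
qed


lemma fdot_map0: "length w = n \<Longrightarrow> fdot n v (map (\<lambda>x. 0) w) = 0"
  by (simp add: fdot_def)

theorem theorem4p3:
  fixes C :: "'a::{field,finite} poly list set"
    and p m q e t n :: nat
  assumes "prime p" and "odd p" and "q = p ^ m" and "card (UNIV :: 'a set) = q"
    and "q = e * t + 1" and "e \<ge> 2" and "t \<ge> 1"
    and "r_cyclic_code e n C"
  shows "r_LCD e n C \<longleftrightarrow>
           (\<forall>a\<in>eroots e. f_cyclic_code n (comp_code e n C a) \<and> f_LCD n (comp_code e n C a))"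
proof -
  have e0: "e > 0" using assms by simp
  have E: "e \<le> card (eroots e :: 'a set)" using card_eroots_ge[of e t] assms by simp
  have cyc: "r_cyclic_code e n C" using assms by simp
  have lin: "r_linear_code e n C" using cyc by (simp add: r_cyclic_code_def)
  have CC: "\<forall>a\<in>eroots e. comp_code e n C a = evc a ` C" using comp_code_eq[OF E e0 lin] by blast
  have rep0C: "replicate n 0 \<in> C" using lin unfolding r_linear_code_def by blast
  have key: "r_LCD e n C \<longleftrightarrow> (\<forall>a\<in>eroots e. f_LCD n (evc a ` C))"
  proof
    assume LCD: "r_LCD e n C"
    hence int: "C \<inter> r_dual e n C = {replicate n 0}" by (simp add: r_LCD_def)
    show "\<forall>a\<in>eroots e. f_LCD n (evc a ` C)"
    proof
      fix a :: 'a assume a: "a \<in> eroots e"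
      have "evc a ` C \<inter> f_dual n (evc a ` C) \<subseteq> {replicate n 0}"
      proof
        fix s assume s: "s \<in> evc a ` C \<inter> f_dual n (evc a ` C)"
        then obtain v where v: "v \<in> C" "s = evc a v" by blast
        have vl: "length v = n" using lin_mem(1)[OF lin v(1)] .
        define w where "w = map (rmul e (mu e a)) v"
        have wC: "w \<in> C" using lin v mu_props(1)[OF E e0 a] unfolding r_linear_code_def w_def by blast
        have wl: "length w = n" using vl by (simp add: w_def)
        have ev: "evc c w = map (\<lambda>x. poly (mu e a) c * x) (evc c v)" if "c \<in> eroots e" for c
          unfolding w_def using evc_rmul[OF that] by simp
        have eva: "evc a w = s" using ev[OF a] v mu_props(2)[OF E e0 a a] by simp
        have "w \<in> r_dual e n C"
          unfolding r_dual_def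
        proof (intro CollectI conjI ballI)
          show "length w = n" by (rule wl)
          fix x assume "x \<in> set w"
          thus "Relem e x" using Relem_mod[OF e0] unfolding w_def rmul_def by auto
        next
          fix v' assume v': "v' \<in> C"
          have vl': "length v' = n" using lin_mem(1)[OF lin v'] .
          have "\<forall>c\<in>eroots e. fdot n (evc c v') (evc c w) = 0"
          proof
            fix c :: 'a assume c: "c \<in> eroots e"
            show "fdot n (evc c v') (evc c w) = 0"
            proof (cases "c = a")
              case True
              have "evc a v' \<in> evc a ` C" using v' by blast
              thus ?thesis using True eva s unfolding f_dual_def by auto
            next
              case False
              thus ?thesis using ev[OF c] mu_props(2)[OF E e0 a c] vl by (simp add: fdot_map0)
            qed
          qed
          thus "rdot e n v' w = 0" using rdot_zero_iff[OF E e0 vl' wl] by blast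
        qed
        hence "w = replicate n 0" using wC int by blast
        thus "s \<in> {replicate n 0}" using eva by simp
      qed
      moreover have "replicate n 0 \<in> evc a ` C" using rep0C by (metis evc_rep image_eqI)
      moreover have "replicate n 0 \<in> f_dual n (evc a ` C)" by (simp add: f_dual_def)
      ultimately have "evc a ` C \<inter> f_dual n (evc a ` C) = {replicate n 0}" by blast
      moreover have "f_linear_code n (evc a ` C)"
        using evc_cyclic[OF e0 cyc a] by (simp add: f_cyclic_code_def)
      ultimately show "f_LCD n (evc a ` C)" by (simp add: f_LCD_def)
    qed
  next
    assume all: "\<forall>a\<in>eroots e. f_LCD n (evc a ` C)"
    have "C \<inter> r_dual e n C \<subseteq> {replicate n 0}"
    proof
      fix w assume w: "w \<in> C \<inter> r_dual e n C"
      have wl: "length w = n" and wR: "\<forall>x\<in>set w. Relem e x" and wd: "\<forall>v\<in>C. rdot e n v w = 0"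
        using w unfolding r_dual_def by auto
      have "\<forall>c\<in>eroots e. evc c w = replicate n 0"
      proof
        fix c :: 'a assume c: "c \<in> eroots e"
        have "evc c w \<in> evc c ` C" using w by blast
        moreover have "evc c w \<in> f_dual n (evc c ` C)"
          unfolding f_dual_def
        proof (intro CollectI conjI ballI)
          show "length (evc c w) = n" using wl by simp
          fix s assume "s \<in> evc c ` C"
          then obtain v where v: "v \<in> C" "s = evc c v" by blast
          have vl: "length v = n" using lin_mem(1)[OF lin v(1)] .
          show "fdot n s (evc c w) = 0"
            using wd v rdot_zero_iff[OF E e0 vl wl] c by blast
        qed
        ultimately show "evc c w = replicate n 0"
          using all c unfolding f_LCD_def by blast
      qed
      thus "w \<in> {replicate n 0}" using vec_zero[OF E wl wR] by simp
    qed
    moreover have "replicate n 0 \<in> r_dual e n C"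
      unfolding r_dual_def
    proof (intro CollectI conjI ballI)
      show "length (replicate n (0::'a poly)) = n" by simp
      fix x assume "x \<in> set (replicate n (0::'a poly))"
      thus "Relem e x" using e0 by (auto simp: Relem_def)
    next
      fix v assume v: "v \<in> C"
      have vl: "length v = n" using lin_mem(1)[OF lin v] .
      show "rdot e n v (replicate n 0) = 0"
        using rdot_zero_iff[OF E e0 vl, of "replicate n 0"] by simp
    qed
    ultimately have "C \<inter> r_dual e n C = {replicate n 0}" using rep0C by blast
    thus "r_LCD e n C" using lin by (simp add: r_LCD_def)
  qed
  have "(\<forall>a\<in>eroots e. f_cyclic_code n (comp_code e n C a) \<and> f_LCD n (comp_code e n C a))
        \<longleftrightarrow> (\<forall>a\<in>eroots e. f_LCD n (evc a ` C))"
    using CC evc_cyclic[OF e0 cyc] by auto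
  thus ?thesis using key by simp
qed

end
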